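(* Assume (A0) and (A3'). For each $N$ let $\mathbf x^N=(x^N_1,\dots,x^N_N)\in S^N$ and $\mathbf a^N\in\mathbf D(\mathbf x^N)$, and set $Q^N:=\mu[(\mathbf x^N,\mathbf a^N)]$, $\mu^N:=\mu[\mathbf x^N]$. Suppose $Q^N\Rightarrow Q\in\mathbb P(D)$ weakly, and let $\mu$ be the first marginal of $Q$. Let $Z^1,Z^2,\dots$ be i.i.d. $\mathcal Z$-valued random variables with law $\mathbb P^Z$ and let $z^0\in\mathcal Z$. Then almost surely $$\frac1N\sum_{i=1}^N\delta_{T(x^N_i,a^N_i,\mu^N,Z^i,z^0)}\Rightarrow\tilde T(\mu,Q,z^0)\quad(N\to\infty),$$ where $\tilde T(\mu,Q,z^0)(B):=\int_D\mathbb P(T(x,a,\mu,Z^1,z^0)\in B)\,Q(d(x,a))$.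
   Context: $S$ is a compact Borel subset of a Euclidean space, $A$ a Borel set, $D(x)\subset A$ for $x\in S$, $D:=\{(x,a):x\in S,a\in D(x)\}$, $\mathbf D(\mathbf x):=\prod_iD(x_i)$. $\mathbb P(S)$, $\mathbb P(D)$ carry the topology of weak convergence ($\Rightarrow$). $\mu[\mathbf x]:=\frac1N\sum_i\delta_{x_i}$, $\mu[(\mathbf x,\mathbf a)]:=\frac1N\sum_i\delta_{(x_i,a_i)}$. $T:S\times A\times\mathbb P(S)\times\mathcal Z^2\to S$ is measurable. (A0): $D$ is compact. (A3'): $\mathcal Z$ is a compact metric space and $(x,a,\mu,z,z_0)\mapsto T(x,a,\mu,z,z_0)$ is continuous. *)

theory Defs
  imports "HOL-Probability.Probability"
begin

text \<open>Probability measures on a Borel set X of a Euclidean (or metric) space,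
  represented as Borel probability measures on the ambient type that are
  concentrated on X.\<close>
definition Prob_on :: "'x::topological_space set \<Rightarrow> 'x measure set" where
  "Prob_on X = {M. sets M = sets borel \<and> prob_space M \<and> emeasure M X = 1}"

definition Cb :: "'x::topological_space set \<Rightarrow> ('x \<Rightarrow> real) set" where
  "Cb X = {f. continuous_on X f \<and> bounded (f ` X)}"

definition weak_conv_on :: "'x::topological_space set \<Rightarrow> (nat \<Rightarrow> 'x measure) \<Rightarrow> 'x measure \<Rightarrow> bool" where
  "weak_conv_on X Ms L \<longleftrightarrow>
     (\<forall>f\<in>Cb X. (\<lambda>n. integral\<^sup>L (Ms n) f) \<longlonglongrightarrow> integral\<^sup>L L f)"

definition weak_topology :: "'x::topological_space set \<Rightarrow> 'x measure topology" where
  "weak_topology X =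
     pullback_topology (Prob_on X) (\<lambda>M. restrict (\<lambda>f. integral\<^sup>L M f) (Cb X))
       (product_topology (\<lambda>_. euclideanreal) (Cb X))"

definition emp_measure :: "nat \<Rightarrow> (nat \<Rightarrow> 'x::topological_space) \<Rightarrow> 'x measure" where
  "emp_measure N xs = measure_of UNIV (sets borel)
     (\<lambda>B. ennreal (real (card {i\<in>{1..N}. xs i \<in> B}) / real N))"

definition Ttilde ::
  "('x::topological_space \<Rightarrow> 'a \<Rightarrow> 'x measure \<Rightarrow> 'z \<Rightarrow> 'z \<Rightarrow> 'x) \<Rightarrow> 'w measure \<Rightarrow> ('w \<Rightarrow> 'z)
   \<Rightarrow> ('x \<times> 'a) set \<Rightarrow> 'x measure \<Rightarrow> ('x \<times> 'a) measure \<Rightarrow> 'z \<Rightarrow> 'x measure" where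
  "Ttilde T M Z1 D \<mu> Q z0 = measure_of UNIV (sets borel)
     (\<lambda>B. \<integral>\<^sup>+ p\<in>D. emeasure M {\<omega>\<in>space M. T (fst p) (snd p) \<mu> (Z1 \<omega>) z0 \<in> B} \<partial>Q)"

end

theory Submission
  imports Defs
begin

lemma emp_measure_distr:
  fixes xs :: "nat \<Rightarrow> 'x::topological_space"
  assumes "N \<ge> 1"
  shows "emp_measure N xs = distr (measure_pmf (pmf_of_set {1..N})) borel xs"
proof -
  let ?R = "distr (measure_pmf (pmf_of_set {1..N})) borel xs"
  have "?R = measure_of UNIV (sets borel) (emeasure ?R)"
    using measure_of_of_measure[of ?R] by simp
  also have "\<dots> = emp_measure N xs"
    unfolding emp_measure_def
  proof (rule measure_of_eq)
    fix a :: "'x set" assume a: "a \<in> sigma_sets UNIV (sets borel)"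
    have "emeasure ?R a = emeasure (measure_pmf (pmf_of_set {1..N})) (xs -` a)"
      using a by (subst emeasure_distr) (auto simp: sets.sigma_sets_eq[of borel, simplified])
    also have "\<dots> = ennreal (real (card ({1..N} \<inter> xs -` a)) / real (card {1..N}))"
      using assms by (subst emeasure_pmf_of_set) auto
    also have "{1..N} \<inter> xs -` a = {i\<in>{1..N}. xs i \<in> a}" by auto
    finally show "emeasure ?R a = ennreal (real (card {i\<in>{1..N}. xs i \<in> a}) / real N)" by simp
  qed auto
  finally show ?thesis by simp
qed

lemma emp_measure_integral:
  assumes "N \<ge> 1" "f \<in> borel_measurable borel"
  shows "integral\<^sup>L (emp_measure N xs) f = (\<Sum>i\<in>{1..N}. f (xs i)) / real N"
  using assms by (simp add: emp_measure_distr integral_distr integral_pmf_of_set)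

lemma emp_measure_Prob_on:
  assumes "N \<ge> 1" "\<And>i. i \<in> {1..N} \<Longrightarrow> xs i \<in> X" "X \<in> sets borel"
  shows "emp_measure N xs \<in> Prob_on X"
proof -
  have "emeasure (emp_measure N xs) X = emeasure (measure_pmf (pmf_of_set {1..N})) (xs -` X)"
    using assms by (simp add: emp_measure_distr emeasure_distr)
  also have "{1..N} \<inter> xs -` X = {1..N}" using assms by auto
  hence "emeasure (measure_pmf (pmf_of_set {1..N})) (xs -` X) = 1" using assms
    by (subst emeasure_pmf_of_set) auto
  finally have "emeasure (emp_measure N xs) X = 1" .
  then show ?thesis using assms
    by (auto simp: Prob_on_def emp_measure_distr intro!: prob_space.prob_space_distr prob_space_measure_pmf)
qed


locale setting =
  fixes S :: "'x::euclidean_space set" and A :: "'a::euclidean_space set"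
    and Dx :: "'x \<Rightarrow> 'a set" and D :: "('x \<times> 'a) set"
    and T :: "'x \<Rightarrow> 'a \<Rightarrow> 'x measure \<Rightarrow> 'z::metric_space \<Rightarrow> 'z \<Rightarrow> 'x"
    and xs :: "nat \<Rightarrow> nat \<Rightarrow> 'x" and as :: "nat \<Rightarrow> nat \<Rightarrow> 'a"
    and Q :: "('x \<times> 'a) measure"
    and M :: "'w measure" and Zs :: "nat \<Rightarrow> 'w \<Rightarrow> 'z" and PZ :: "'z measure" and z0 :: 'z
  assumes S_compact: "compact S" and S_borel: "S \<in> sets borel"
    and A_borel: "A \<in> sets borel"
    and Dx_sub: "\<And>x. x \<in> S \<Longrightarrow> Dx x \<subseteq> A"
    and D_def: "D = {(x, a). x \<in> S \<and> a \<in> Dx x}"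
    and A0: "compact D"
    and Z_compact: "compact (UNIV :: 'z set)"
    and A3': "continuous_map
       (prod_topology (top_of_set S) (prod_topology (top_of_set A)
         (prod_topology (weak_topology S) (prod_topology euclidean euclidean))))
       (top_of_set S) (\<lambda>(x, a, \<mu>, z, z'). T x a \<mu> z z')"
    and xs_in: "\<And>N i. i \<in> {1..N} \<Longrightarrow> xs N i \<in> S"
    and as_in: "\<And>N i. i \<in> {1..N} \<Longrightarrow> as N i \<in> Dx (xs N i)"
    and Q_in: "Q \<in> Prob_on D"
    and Q_conv: "weak_conv_on D (\<lambda>N. emp_measure N (\<lambda>i. (xs N i, as N i))) Q"
    and M_prob: "prob_space M"
    and Zs_rv: "\<And>i. Zs i \<in> measurable M borel"
    and Zs_indep: "prob_space.indep_vars M (\<lambda>_. borel) Zs UNIV"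
    and Zs_law: "\<And>i. distr M borel (Zs i) = PZ"
begin

lemma topspace_W: "topspace (weak_topology S) = Prob_on S"
  by (auto simp: weak_topology_def topspace_pullback_topology topspace_product_topology)

lemma limitin_W:
  assumes ev: "eventually (\<lambda>n. \<nu> n \<in> Prob_on S) F" and l: "\<nu>0 \<in> Prob_on S"
    and conv: "\<And>f. f \<in> Cb S \<Longrightarrow> ((\<lambda>n. integral\<^sup>L (\<nu> n) f) \<longlongrightarrow> integral\<^sup>L \<nu>0 f) F"
  shows "limitin (weak_topology S) \<nu> \<nu>0 F"
proof -
  let ?phi = "\<lambda>M. restrict (\<lambda>f. integral\<^sup>L M f) (Cb S)"
  let ?P = "product_topology (\<lambda>_. euclideanreal) (Cb S)"
  have lim: "limitin ?P (\<lambda>n. ?phi (\<nu> n)) (?phi \<nu>0) F"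
    unfolding limitin_componentwise
  proof (intro conjI ballI)
    show "?phi \<nu>0 \<in> extensional (Cb S)" by simp
    show "eventually (\<lambda>n. ?phi (\<nu> n) \<in> topspace ?P) F"
      by (simp add: topspace_product_topology)
    fix f assume "f \<in> Cb S"
    then show "limitin euclideanreal (\<lambda>n. ?phi (\<nu> n) f) (?phi \<nu>0 f) F"
      using conv by simp
  qed
  show ?thesis unfolding limitin_def
  proof (intro conjI allI impI)
    show "\<nu>0 \<in> topspace (weak_topology S)" using l by (simp add: topspace_W)
    fix U assume U: "openin (weak_topology S) U \<and> \<nu>0 \<in> U"
    then obtain V where V: "openin ?P V" "U = ?phi -` V \<inter> Prob_on S"
      by (auto simp: weak_topology_def openin_pullback_topology)
    with U have "?phi \<nu>0 \<in> V" by auto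
    with lim V have "eventually (\<lambda>n. ?phi (\<nu> n) \<in> V) F" unfolding limitin_def by blast
    with ev show "eventually (\<lambda>n. \<nu> n \<in> U) F"
      by eventually_elim (use V in auto)
  qed
qed

lemma T_lim:
  assumes "limitin (top_of_set S) xf x F" "limitin (top_of_set A) af a F"
    "limitin (weak_topology S) \<nu>f \<nu> F" "(zf \<longlongrightarrow> z) F"
  shows "limitin (top_of_set S) (\<lambda>t. T (xf t) (af t) (\<nu>f t) (zf t) z0) (T x a \<nu> z z0) F"
proof -
  have "limitin (prod_topology (top_of_set S) (prod_topology (top_of_set A)
         (prod_topology (weak_topology S) (prod_topology euclidean euclidean))))
         (\<lambda>t. (xf t, af t, \<nu>f t, zf t, z0)) (x, a, \<nu>, z, z0) F"
    using assms by (simp add: limitin_pairwise o_def tendsto_Pair)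
  from continuous_map_limit[OF A3' this] show ?thesis by (simp add: o_def)
qed

end

lemma integral_nonmeas_zero:
  assumes "sets N = sets borel" "f \<notin> borel_measurable borel"
  shows "integral\<^sup>L N f = 0"
proof -
  have "f \<notin> borel_measurable N" using assms measurable_cong_sets[of N borel] by auto
  then show ?thesis using borel_measurable_integrable not_integrable_integral_eq by blast
qed

context setting begin

definition "mu0 = distr Q borel fst"
definition "muN N = emp_measure N (xs N)"
definition "Tw p \<nu> z = T (fst p) (snd p) \<nu> z z0"
definition "G \<nu> (g::'x\<Rightarrow>real) p = (\<integral>\<omega>. g (Tw p \<nu> (Zs 1 \<omega>)) \<partial>M)"

lemma Q_facts: "prob_space Q" "sets Q = sets borel" "emeasure Q D = 1" "space Q = UNIV"
proof -
  show 1: "prob_space Q" "sets Q = sets borel" "emeasure Q D = 1"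
    using Q_in by (auto simp: Prob_on_def)
  have "space Q = space borel" by (rule sets_eq_imp_space_eq) (rule 1(2))
  then show "space Q = UNIV" by simp
qed

lemma Q_meas: "measurable Q N = measurable borel N"
  using Q_facts(2) by (rule measurable_cong_sets) simp

lemma fst_meas: "fst \<in> measurable Q borel"
proof -
  have "(\<lambda>x::('x\<times>'a). fst x) \<in> borel_measurable borel"
    by (intro borel_measurable_continuous_onI continuous_on_fst continuous_on_id)
  then show ?thesis unfolding Q_meas by simp
qed

lemma D_sub: "D \<subseteq> S \<times> A" using Dx_sub by (auto simp: D_def)
lemma D_closed: "closed D" using A0 compact_imp_closed by blast
lemma D_borel: "D \<in> sets borel" using D_closed by auto

lemma AE_Q_D: "AE p in Q. p \<in> D"
proof -
  interpret prob_space Q by (rule Q_facts)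
  have "D \<in> sets Q" using Q_facts D_borel by simp
  then show ?thesis using Q_facts(3) by (intro AE_prob_1) (simp add: emeasure_eq_measure)
qed

lemma D_ne: "D \<noteq> {}" using Q_facts(3) by auto

lemma mu0_Prob: "mu0 \<in> Prob_on S"
proof -
  interpret prob_space Q by (rule Q_facts)
  have "emeasure mu0 S = emeasure Q (fst -` S)"
    unfolding mu0_def using emeasure_distr[OF fst_meas S_borel] Q_facts(4) by simp
  also have "\<dots> = 1"
  proof (rule antisym)
    show "emeasure Q (fst -` S) \<le> 1" by (rule emeasure_le_1)
    have "emeasure Q D \<le> emeasure Q (fst -` S)"
      using D_sub measurable_sets[OF fst_meas S_borel] Q_facts by (intro emeasure_mono) auto
    then show "1 \<le> emeasure Q (fst -` S)" using Q_facts by simp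
  qed
  finally have "emeasure mu0 S = 1" .
  moreover have "prob_space mu0" unfolding mu0_def by (rule prob_space_distr[OF fst_meas])
  ultimately show ?thesis unfolding Prob_on_def by (simp add: mu0_def)
qed

lemma muN_Prob: "N \<ge> 1 \<Longrightarrow> muN N \<in> Prob_on S"
  unfolding muN_def by (rule emp_measure_Prob_on) (use xs_in S_borel in auto)

lemma pN_in: "i \<in> {1..N} \<Longrightarrow> (xs N i, as N i) \<in> D"
  using xs_in as_in by (auto simp: D_def)

lemma mu_conv: "limitin (weak_topology S) muN mu0 sequentially"
proof (rule limitin_W)
  show "eventually (\<lambda>n. muN n \<in> Prob_on S) sequentially"
    using eventually_ge_at_top[of 1] by eventually_elim (rule muN_Prob)
  show "mu0 \<in> Prob_on S" by (rule mu0_Prob)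
  fix f assume f: "f \<in> Cb S"
  show "(\<lambda>n. integral\<^sup>L (muN n) f) \<longlonglongrightarrow> integral\<^sup>L mu0 f"
  proof (cases "f \<in> borel_measurable borel")
    case False
    have "integral\<^sup>L mu0 f = 0" using False mu0_Prob unfolding Prob_on_def
      by (intro integral_nonmeas_zero) auto
    moreover have "eventually (\<lambda>n. integral\<^sup>L (muN n) f = 0) sequentially"
      using eventually_ge_at_top[of 1]
    proof eventually_elim
      case (elim n)
      with muN_Prob[OF elim] False show ?case unfolding Prob_on_def
        by (intro integral_nonmeas_zero) auto
    qed
    ultimately show ?thesis by (simp add: tendsto_eventually)
  next
    case True
    have fS: "continuous_on S f" "bounded (f ` S)" using f unfolding Cb_def by auto
    have fD: "(\<lambda>p. f (fst p)) \<in> Cb D"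
    proof -
      have "continuous_on D (\<lambda>p. f (fst p))"
        by (rule continuous_on_compose2[OF fS(1) continuous_on_fst[OF continuous_on_id]]) (use D_sub in auto)
      moreover have "(\<lambda>p. f (fst p)) ` D \<subseteq> f ` S" using D_sub by auto
      ultimately show ?thesis using bounded_subset[OF fS(2)] unfolding Cb_def by blast
    qed
    have lim: "(\<lambda>n. integral\<^sup>L (emp_measure n (\<lambda>i. (xs n i, as n i))) (\<lambda>p. f (fst p))) \<longlonglongrightarrow> integral\<^sup>L Q (\<lambda>p. f (fst p))"
      using Q_conv fD unfolding weak_conv_on_def by blast
    have m: "(\<lambda>p::'x\<times>'a. f (fst p)) \<in> borel_measurable borel"
      using fst_meas unfolding Q_meas by (rule measurable_compose[OF _ True])
    have ev: "eventually (\<lambda>n. integral\<^sup>L (emp_measure n (\<lambda>i. (xs n i, as n i))) (\<lambda>p. f (fst p)) = integral\<^sup>L (muN n) f) sequentially"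
      using eventually_ge_at_top[of 1]
    proof eventually_elim
      case (elim n)
      show ?case unfolding muN_def
        using emp_measure_integral[OF elim m, of "\<lambda>i. (xs n i, as n i)"]
              emp_measure_integral[OF elim True, of "xs n"] by simp
    qed
    have eq: "integral\<^sup>L Q (\<lambda>p. f (fst p)) = integral\<^sup>L mu0 f"
      unfolding mu0_def by (rule integral_distr[OF fst_meas True, symmetric])
    show ?thesis using tendsto_cong[OF ev] lim eq by simp
  qed
qed

end

context setting begin
lemma Tw_in:
  assumes "p \<in> D" "\<nu> \<in> Prob_on S" shows "Tw p \<nu> z \<in> S"
proof -
  have "(fst p, snd p, \<nu>, z, z0) \<in> topspace (prod_topology (top_of_set S) (prod_topology (top_of_set A)
         (prod_topology (weak_topology S) (prod_topology euclidean euclidean))))"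
    using assms D_sub by (auto simp: topspace_W)
  from funcset_mem[OF continuous_map_funspace[OF A3'] this] show ?thesis by (simp add: Tw_def)
qed

lemma Tw_lim:
  assumes "(pf \<longlongrightarrow> p) F" "eventually (\<lambda>t. pf t \<in> D) F" "p \<in> D"
    "limitin (weak_topology S) \<nu>f \<nu> F" "(zf \<longlongrightarrow> z) F"
  shows "((\<lambda>t. Tw (pf t) (\<nu>f t) (zf t)) \<longlongrightarrow> Tw p \<nu> z) F"
proof -
  have "limitin (top_of_set S) (\<lambda>t. fst (pf t)) (fst p) F"
    using assms D_sub by (auto simp: limitin_subtopology intro!: tendsto_fst elim!: eventually_mono)
  moreover have "limitin (top_of_set A) (\<lambda>t. snd (pf t)) (snd p) F"
    using assms D_sub by (auto simp: limitin_subtopology intro!: tendsto_snd elim!: eventually_mono)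
  ultimately have "limitin (top_of_set S) (\<lambda>t. Tw (pf t) (\<nu>f t) (zf t)) (Tw p \<nu> z) F"
    unfolding Tw_def using assms by (intro T_lim) auto
  then show ?thesis by (simp add: limitin_subtopology)
qed

lemma Tw_cont: "p \<in> D \<Longrightarrow> \<nu> \<in> Prob_on S \<Longrightarrow> continuous_on UNIV (Tw p \<nu>)"
  unfolding continuous_on_def
  by (auto intro!: Tw_lim simp: topspace_W)

lemma gTw_cont:
  fixes g :: "'x \<Rightarrow> real"
  assumes "p \<in> D" "\<nu> \<in> Prob_on S" "continuous_on S g"
  shows "continuous_on UNIV (\<lambda>z. g (Tw p \<nu> z))"
  using continuous_on_compose2[OF assms(3) Tw_cont[OF assms(1,2)]] Tw_in[OF assms(1,2)] by auto

lemma gTw_meas: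
  fixes g :: "'x \<Rightarrow> real"
  assumes "p \<in> D" "\<nu> \<in> Prob_on S" "continuous_on S g"
  shows "(\<lambda>\<omega>. g (Tw p \<nu> (Zs i \<omega>))) \<in> borel_measurable M"
  using measurable_compose[OF Zs_rv borel_measurable_continuous_onI[OF gTw_cont[OF assms]]] by simp

lemma bounded_on_S:
  fixes g :: "'x \<Rightarrow> real"
  assumes "continuous_on S g"
  obtains B where "B > 0" "\<And>x. x \<in> S \<Longrightarrow> \<bar>g x\<bar> \<le> B"
proof -
  have "bounded (g ` S)" using compact_continuous_image[OF assms S_compact] compact_imp_bounded by blast
  then obtain B where "B > 0" "\<forall>y\<in>g`S. norm y \<le> B" using bounded_pos by blast
  then show ?thesis using that by auto
qed

lemma G_Zs:
  fixes g :: "'x \<Rightarrow> real"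
  assumes "p \<in> D" "\<nu> \<in> Prob_on S" "continuous_on S g"
  shows "(\<integral>\<omega>. g (Tw p \<nu> (Zs i \<omega>)) \<partial>M) = G \<nu> g p"
proof -
  have m: "(\<lambda>z. g (Tw p \<nu> z)) \<in> borel_measurable borel"
    by (rule borel_measurable_continuous_onI[OF gTw_cont[OF assms]])
  have "(\<integral>\<omega>. g (Tw p \<nu> (Zs i \<omega>)) \<partial>M) = (\<integral>z. g (Tw p \<nu> z) \<partial>distr M borel (Zs i))"
    using m Zs_rv by (subst integral_distr) auto
  also have "\<dots> = (\<integral>z. g (Tw p \<nu> z) \<partial>distr M borel (Zs 1))" by (simp add: Zs_law)
  also have "\<dots> = G \<nu> g p"
    using m Zs_rv unfolding G_def by (subst integral_distr) auto
  finally show ?thesis .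
qed

lemma G_lim:
  fixes g :: "'x \<Rightarrow> real"
  assumes "pf \<longlonglongrightarrow> p" "\<And>n. pf n \<in> D" "p \<in> D" "\<And>n. \<nu>f n \<in> Prob_on S"
    "limitin (weak_topology S) \<nu>f \<nu> sequentially" "continuous_on S g"
  shows "(\<lambda>n. G (\<nu>f n) g (pf n)) \<longlonglongrightarrow> G \<nu> g p"
proof -
  interpret M: prob_space M by (rule M_prob)
  obtain B where B: "B > 0" "\<And>x. x \<in> S \<Longrightarrow> \<bar>g x\<bar> \<le> B" using bounded_on_S[OF assms(6)] by blast
  have \<nu>: "\<nu> \<in> Prob_on S" using assms(5) by (simp add: limitin_def topspace_W)
  show ?thesis unfolding G_def
  proof (rule integral_dominated_convergence[where w="\<lambda>_. B"])
    show "(\<lambda>\<omega>. g (Tw p \<nu> (Zs 1 \<omega>))) \<in> borel_measurable M" by (rule gTw_meas[OF assms(3) \<nu> assms(6)])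
    show "\<And>n. (\<lambda>\<omega>. g (Tw (pf n) (\<nu>f n) (Zs 1 \<omega>))) \<in> borel_measurable M"
      by (rule gTw_meas[OF assms(2,4,6)])
    show "integrable M (\<lambda>_. B)" by simp
    show "AE \<omega> in M. (\<lambda>n. g (Tw (pf n) (\<nu>f n) (Zs 1 \<omega>))) \<longlonglongrightarrow> g (Tw p \<nu> (Zs 1 \<omega>))"
    proof (rule AE_I2)
      fix \<omega>
      have "(\<lambda>n. Tw (pf n) (\<nu>f n) (Zs 1 \<omega>)) \<longlonglongrightarrow> Tw p \<nu> (Zs 1 \<omega>)"
        using assms by (intro Tw_lim) auto
      then show "(\<lambda>n. g (Tw (pf n) (\<nu>f n) (Zs 1 \<omega>))) \<longlonglongrightarrow> g (Tw p \<nu> (Zs 1 \<omega>))"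
        using assms \<nu> Tw_in by (intro continuous_on_tendsto_compose[OF assms(6)]) auto
    qed
    show "\<And>n. AE \<omega> in M. norm (g (Tw (pf n) (\<nu>f n) (Zs 1 \<omega>))) \<le> B"
      using B Tw_in assms by auto
  qed
qed

end

lemma limitin_subseq:
  assumes "limitin X f l sequentially" "strict_mono r"
  shows "limitin X (\<lambda>n. f (r n)) l sequentially"
  using assms unfolding limitin_def by (auto intro: eventually_subseq)

context setting begin

lemma G_bound:
  fixes g :: "'x \<Rightarrow> real"
  assumes "continuous_on S g" "p \<in> D" "\<nu> \<in> Prob_on S" "\<And>x. x \<in> S \<Longrightarrow> \<bar>g x\<bar> \<le> B"
  shows "\<bar>G \<nu> g p\<bar> \<le> B"
proof -
  interpret M: prob_space M by (rule M_prob)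
  have "integrable M (\<lambda>\<omega>. g (Tw p \<nu> (Zs 1 \<omega>)))"
    using assms Tw_in by (intro M.integrable_const_bound[where B=B] gTw_meas) auto
  then have "(\<integral>\<omega>. \<bar>g (Tw p \<nu> (Zs 1 \<omega>))\<bar> \<partial>M) \<le> (\<integral>\<omega>. B \<partial>M)"
    using assms Tw_in by (intro integral_mono) auto
  moreover have "\<bar>G \<nu> g p\<bar> \<le> (\<integral>\<omega>. \<bar>g (Tw p \<nu> (Zs 1 \<omega>))\<bar> \<partial>M)"
    unfolding G_def by (rule integral_abs_bound)
  ultimately have "\<bar>G \<nu> g p\<bar> \<le> (\<integral>\<omega>. B \<partial>M)" by linarith
  then show ?thesis by (simp add: M.prob_space)
qed

lemma G_cont:
  fixes g :: "'x \<Rightarrow> real"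
  assumes "continuous_on S g"
  shows "continuous_on D (G mu0 g)"
proof (rule continuous_on_sequentiallyI)
  fix u a assume "\<forall>n. u n \<in> D" "a \<in> D" "u \<longlonglongrightarrow> a"
  then show "(\<lambda>n. G mu0 g (u n)) \<longlonglongrightarrow> G mu0 g a"
    using mu0_Prob assms by (intro G_lim[where \<nu>f="\<lambda>_. mu0"]) (auto simp: topspace_W)
qed

end

context setting begin
lemma G_unif:
  fixes g :: "'x \<Rightarrow> real"
  assumes g: "continuous_on S g" and e: "e > 0"
  shows "eventually (\<lambda>N. \<forall>p\<in>D. \<bar>G (muN N) g p - G mu0 g p\<bar> < e) sequentially"
proof (rule ccontr)
  let ?Q = "\<lambda>N. \<forall>p\<in>D. \<bar>G (muN N) g p - G mu0 g p\<bar> < e"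
  assume nev: "\<not> eventually ?Q sequentially"
  have inf: "infinite {N. N \<ge> 1 \<and> \<not> ?Q N}"
  proof
    assume "finite {N. N \<ge> 1 \<and> \<not> ?Q N}"
    then have "\<not> frequently (\<lambda>N. N \<ge> 1 \<and> \<not> ?Q N) cofinite"
      by (subst frequently_cofinite) simp
    then have "eventually (\<lambda>N. \<not> (N \<ge> 1 \<and> \<not> ?Q N)) sequentially"
      unfolding cofinite_eq_sequentially frequently_def by blast
    then have "eventually ?Q sequentially"
      using eventually_ge_at_top[of 1] by eventually_elim auto
    with nev show False by simp
  qed
  obtain r :: "nat \<Rightarrow> nat" where r0: "strict_mono r \<and> (\<forall>n::nat. r n \<in> {N. N \<ge> 1 \<and> \<not> ?Q N})"
    using infinite_enumerate[OF inf] by blast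
  have r: "strict_mono r" "\<And>n. r n \<ge> 1" "\<And>n. \<not> ?Q (r n)" using r0 by auto
  have "\<forall>n. \<exists>p. p \<in> D \<and> \<bar>G (muN (r n)) g p - G mu0 g p\<bar> \<ge> e"
  proof
    fix n show "\<exists>p. p \<in> D \<and> \<bar>G (muN (r n)) g p - G mu0 g p\<bar> \<ge> e"
    proof -
      from r(3)[of n] obtain p where "p \<in> D" "\<not> \<bar>G (muN (r n)) g p - G mu0 g p\<bar> < e" by blast
      then show ?thesis by (intro exI[of _ p]) simp
    qed
  qed
  then obtain pf where pf0: "\<forall>n. pf n \<in> D \<and> \<bar>G (muN (r n)) g (pf n) - G mu0 g (pf n)\<bar> \<ge> e"
    by (rule choice[THEN exE]) blast
  have pf: "\<And>n. pf n \<in> D" "\<And>n. \<bar>G (muN (r n)) g (pf n) - G mu0 g (pf n)\<bar> \<ge> e"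
    using pf0 by auto
  have "\<forall>n. pf n \<in> D" using pf(1) by blast
  then obtain q and s :: "nat \<Rightarrow> nat" where qs: "q \<in> D" "strict_mono s" "(pf \<circ> s) \<longlonglongrightarrow> q"
    by (rule seq_compactE[OF compact_imp_seq_compact[OF A0]])
  have l1: "(\<lambda>n. G (muN (r (s n))) g (pf (s n))) \<longlonglongrightarrow> G mu0 g q"
  proof (rule G_lim)
    show "(\<lambda>n. pf (s n)) \<longlonglongrightarrow> q" using qs by (simp add: o_def)
    show "limitin (weak_topology S) (\<lambda>n. muN (r (s n))) mu0 sequentially"
      using limitin_subseq[OF mu_conv strict_mono_o[OF r(1) qs(2)]] by (simp add: o_def)
    show "\<And>n. pf (s n) \<in> D" by (rule pf(1))
    show "q \<in> D" by (rule qs(1))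
    show "\<And>n. muN (r (s n)) \<in> Prob_on S" by (rule muN_Prob[OF r(2)])
    show "continuous_on S g" by (rule g)
  qed
  have l2: "(\<lambda>n. G mu0 g (pf (s n))) \<longlonglongrightarrow> G mu0 g q"
    using qs pf mu0_Prob g by (intro G_lim[where \<nu>f="\<lambda>_. mu0"]) (auto simp: topspace_W o_def)
  have "(\<lambda>n. \<bar>G (muN (r (s n))) g (pf (s n)) - G mu0 g (pf (s n))\<bar>) \<longlonglongrightarrow> \<bar>G mu0 g q - G mu0 g q\<bar>"
    by (intro tendsto_intros l1 l2)
  then have "eventually (\<lambda>n. \<bar>G (muN (r (s n))) g (pf (s n)) - G mu0 g (pf (s n))\<bar> < e) sequentially"
    using e by (intro order_tendstoD(2)) auto
  then obtain n where "\<bar>G (muN (r (s n))) g (pf (s n)) - G mu0 g (pf (s n))\<bar> < e"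
    by (auto simp: eventually_sequentially)
  then show False using pf(2)[of "s n"] by linarith
qed

end

context setting begin
definition "Lg g = (\<integral>p. indicator D p * G mu0 g p \<partial>Q)"

lemma E_conv:
  fixes g :: "'x \<Rightarrow> real"
  assumes g: "continuous_on S g"
  shows "(\<lambda>N. (\<Sum>i\<in>{1..N}. G (muN N) g (xs N i, as N i)) / real N) \<longlonglongrightarrow> Lg g"
proof -
  obtain B where B: "B > 0" "\<And>x. x \<in> S \<Longrightarrow> \<bar>g x\<bar> \<le> B" using bounded_on_S[OF g] by blast
  define h where "h = (\<lambda>p. indicator D p * G mu0 g p)"
  have hc: "continuous_on D h"
    using G_cont[OF g] by (rule continuous_on_eq) (auto simp: h_def)
  have hm: "h \<in> borel_measurable borel"
    using borel_measurable_continuous_on_indicator[OF D_borel G_cont[OF g]] by (simp add: h_def)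
  have hb: "bounded (h ` D)"
    unfolding bounded_iff
  proof (intro exI ballI)
    fix y assume "y \<in> h ` D"
    then obtain p where "p \<in> D" "y = h p" by blast
    then show "norm y \<le> B" using G_bound[OF g \<open>p \<in> D\<close> mu0_Prob B(2)] by (simp add: h_def)
  qed
  have lim1: "(\<lambda>N. integral\<^sup>L (emp_measure N (\<lambda>i. (xs N i, as N i))) h) \<longlonglongrightarrow> integral\<^sup>L Q h"
    using Q_conv hc hb unfolding weak_conv_on_def Cb_def by blast
  have ev1: "eventually (\<lambda>N. integral\<^sup>L (emp_measure N (\<lambda>i. (xs N i, as N i))) h =
        (\<Sum>i\<in>{1..N}. G mu0 g (xs N i, as N i)) / real N) sequentially"
    using eventually_ge_at_top[of 1]
  proof eventually_elim
    case (elim N)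
    have se: "(\<Sum>i\<in>{1..N}. h (xs N i, as N i)) = (\<Sum>i\<in>{1..N}. G mu0 g (xs N i, as N i))"
      by (rule sum.cong) (auto simp: h_def pN_in)
    have "integral\<^sup>L (emp_measure N (\<lambda>i. (xs N i, as N i))) h = (\<Sum>i\<in>{1..N}. h (xs N i, as N i)) / real N"
      by (rule emp_measure_integral[OF elim hm])
    then show ?case by (simp only: se)
  qed
  have a0: "(\<lambda>N. (\<Sum>i\<in>{1..N}. G mu0 g (xs N i, as N i)) / real N) \<longlonglongrightarrow> integral\<^sup>L Q h"
    using tendsto_cong[OF ev1] lim1 by simp
  have a: "(\<lambda>N. (\<Sum>i\<in>{1..N}. G mu0 g (xs N i, as N i)) / real N) \<longlonglongrightarrow> Lg g"
    using a0 by (simp add: Lg_def h_def)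
  have d: "(\<lambda>N. (\<Sum>i\<in>{1..N}. G (muN N) g (xs N i, as N i)) / real N
           - (\<Sum>i\<in>{1..N}. G mu0 g (xs N i, as N i)) / real N) \<longlonglongrightarrow> 0"
  proof (rule tendstoI)
    fix e :: real assume e: "e > 0"
    show "eventually (\<lambda>N. dist ((\<Sum>i\<in>{1..N}. G (muN N) g (xs N i, as N i)) / real N
           - (\<Sum>i\<in>{1..N}. G mu0 g (xs N i, as N i)) / real N) 0 < e) sequentially"
      using G_unif[OF g half_gt_zero[OF e]] eventually_ge_at_top[of 1]
    proof eventually_elim
      case (elim N)
      have "\<bar>(\<Sum>i\<in>{1..N}. G (muN N) g (xs N i, as N i)) - (\<Sum>i\<in>{1..N}. G mu0 g (xs N i, as N i))\<bar>
          = \<bar>\<Sum>i\<in>{1..N}. G (muN N) g (xs N i, as N i) - G mu0 g (xs N i, as N i)\<bar>"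
        by (simp add: sum_subtractf)
      also have "\<dots> \<le> (\<Sum>i\<in>{1..N}. \<bar>G (muN N) g (xs N i, as N i) - G mu0 g (xs N i, as N i)\<bar>)"
        by (rule sum_abs)
      also have "\<dots> \<le> (\<Sum>i\<in>{1..N}. e/2)"
        using elim(1) pN_in by (intro sum_mono) (auto intro: less_imp_le)
      also have "\<dots> = real N * (e/2)" by simp
      finally have *: "\<bar>(\<Sum>i\<in>{1..N}. G (muN N) g (xs N i, as N i)) - (\<Sum>i\<in>{1..N}. G mu0 g (xs N i, as N i))\<bar> \<le> real N * (e/2)" .
      have N: "real N > 0" using elim(2) by simp
      have "dist ((\<Sum>i\<in>{1..N}. G (muN N) g (xs N i, as N i)) / real N
           - (\<Sum>i\<in>{1..N}. G mu0 g (xs N i, as N i)) / real N) 0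
           = \<bar>(\<Sum>i\<in>{1..N}. G (muN N) g (xs N i, as N i)) - (\<Sum>i\<in>{1..N}. G mu0 g (xs N i, as N i))\<bar> / real N"
        using N by (simp add: dist_real_def diff_divide_distrib[symmetric])
      also have "\<dots> \<le> e/2" using * N by (simp add: divide_le_eq mult.commute)
      finally show ?case using e by linarith
    qed
  qed
  show ?thesis using tendsto_add[OF d a] by simp
qed

end

context setting begin

lemma hoeff_bound:
  fixes g :: "'x \<Rightarrow> real"
  assumes g: "continuous_on S g" and B: "B > 0" "\<And>x. x \<in> S \<Longrightarrow> \<bar>g x\<bar> \<le> B"
    and N: "N \<ge> 1" and e: "e > 0"
  shows "measure M {\<omega>\<in>space M. e * real N \<le> \<bar>(\<Sum>i\<in>{1..N}. g (Tw (xs N i, as N i) (muN N) (Zs i \<omega>)))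
            - (\<Sum>i\<in>{1..N}. G (muN N) g (xs N i, as N i))\<bar>}
         \<le> 2 * exp (- (e^2 / (2 * B^2))) ^ N"
proof -
  interpret M: prob_space M by (rule M_prob)
  define X where "X i \<omega> = g (Tw (xs N i, as N i) (muN N) (Zs i \<omega>))" for i \<omega>
  have ind: "M.indep_vars (\<lambda>_. borel) X {1..N}"
    unfolding X_def
  proof (rule M.indep_vars_compose2[where X=Zs and M'="\<lambda>_. borel"])
    show "M.indep_vars (\<lambda>_. borel) Zs {1..N}"
      by (rule M.indep_vars_subset[OF Zs_indep]) simp
    fix i :: nat assume i: "i \<in> {1..N}"
    show "(\<lambda>z. g (Tw (xs N i, as N i) (muN N) z)) \<in> borel_measurable borel"
      by (rule borel_measurable_continuous_onI[OF gTw_cont[OF pN_in[OF i] muN_Prob[OF N] g]])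
  qed
  interpret H: Hoeffding_ineq M "{1..N}" X "\<lambda>_. -B" "\<lambda>_. B" "\<Sum>i\<in>{1..N}. M.expectation (X i)"
  proof unfold_locales
    show "finite {1..N}" by simp
    show "M.indep_vars (\<lambda>_. borel) X {1..N}" by (rule ind)
    fix i assume i: "i \<in> {1..N}"
    show "AE x in M. X i x \<in> {-B..B}"
    proof (rule AE_I2)
      fix x
      have "\<bar>X i x\<bar> \<le> B" unfolding X_def by (rule B(2)[OF Tw_in[OF pN_in[OF i] muN_Prob[OF N]]])
      then show "X i x \<in> {-B..B}" by (simp add: abs_le_iff)
    qed
  qed simp
  have exp: "M.expectation (X i) = G (muN N) g (xs N i, as N i)" if "i \<in> {1..N}" for i
    unfolding X_def by (rule G_Zs[OF pN_in[OF that] muN_Prob[OF N] g])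
  have sq: "(\<Sum>i\<in>{1..N}. (B - - B)\<^sup>2) = real N * (4 * B^2)"
    by (simp add: power2_eq_square algebra_simps)
  have "M.prob {\<omega>\<in>space M. \<bar>(\<Sum>i\<in>{1..N}. X i \<omega>) - (\<Sum>i\<in>{1..N}. M.expectation (X i))\<bar> \<ge> e * real N}
        \<le> 2 * exp (-2 * (e * real N)\<^sup>2 / (\<Sum>i\<in>{1..N}. (B - - B)\<^sup>2))"
    using e N B by (intro H.Hoeffding_ineq_abs_ge) (auto simp: sq)
  also have "-2 * (e * real N)\<^sup>2 / (\<Sum>i\<in>{1..N}. (B - - B)\<^sup>2) = real N * (- (e^2 / (2 * B^2)))"
    unfolding sq using N B by (simp add: field_simps power2_eq_square)
  also have "exp (real N * (- (e^2 / (2 * B^2)))) = exp (- (e^2 / (2 * B^2))) ^ N"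
    by (rule exp_of_nat_mult)
  also have "(\<Sum>i\<in>{1..N}. M.expectation (X i)) = (\<Sum>i\<in>{1..N}. G (muN N) g (xs N i, as N i))"
    by (rule sum.cong) (auto simp: exp)
  finally show ?thesis by (simp add: X_def)
qed

lemma hoeff_AE:
  fixes g :: "'x \<Rightarrow> real"
  assumes g: "continuous_on S g"
  shows "AE \<omega> in M. (\<lambda>N. (\<Sum>i\<in>{1..N}. g (Tw (xs N i, as N i) (muN N) (Zs i \<omega>))) / real N
            - (\<Sum>i\<in>{1..N}. G (muN N) g (xs N i, as N i)) / real N) \<longlonglongrightarrow> 0"
proof -
  interpret M: prob_space M by (rule M_prob)
  obtain B where B: "B > 0" "\<And>x. x \<in> S \<Longrightarrow> \<bar>g x\<bar> \<le> B" using bounded_on_S[OF g] by blast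
  define F where "F = (\<lambda>N \<omega>. \<bar>(\<Sum>i\<in>{1..N}. g (Tw (xs N i, as N i) (muN N) (Zs i \<omega>)))
            - (\<Sum>i\<in>{1..N}. G (muN N) g (xs N i, as N i))\<bar>)"
  define A where "A e N = {\<omega>\<in>space M. e * real N \<le> F N \<omega>}" for e :: real and N
  have Fm: "F N \<in> borel_measurable M" for N
  proof (cases "N \<ge> 1")
    case True
    show ?thesis unfolding F_def
      by (intro borel_measurable_abs borel_measurable_diff borel_measurable_sum borel_measurable_const
            gTw_meas pN_in muN_Prob[OF True] g)
  next
    case False then show ?thesis by (simp add: F_def)
  qed
  have As: "A e N \<in> sets M" for e N
  proof -
    have "A e N = F N -` {e * real N..} \<inter> space M" by (auto simp: A_def)
    then show ?thesis using measurable_sets[OF Fm] by simp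
  qed
  have BC: "AE \<omega> in M. eventually (\<lambda>N. \<omega> \<in> space M - A e N) sequentially" if e: "e > 0" for e
  proof (rule borel_cantelli_AE1)
    show "\<And>n. A e n \<in> sets M" by (rule As)
    show "\<And>n. emeasure M (A e n) < \<infinity>" by (simp add: M.emeasure_eq_measure)
    define c where "c = exp (- (e^2 / (2 * B^2)))"
    have c: "norm c < 1" "c > 0" unfolding c_def using e B by auto
    show "summable (\<lambda>n. measure M (A e n))"
    proof (rule summable_comparison_test'[where N=1])
      show "summable (\<lambda>n. 2 * c ^ n)" using c by (intro summable_mult summable_geometric)
      fix n :: nat assume n: "n \<ge> 1"
      show "norm (measure M (A e n)) \<le> 2 * c ^ n"
        using hoeff_bound[OF g B n e] by (simp add: A_def F_def c_def)
    qed
  qed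
  have "AE \<omega> in M. \<forall>k::nat. eventually (\<lambda>N. \<omega> \<in> space M - A (inverse (real (Suc k))) N) sequentially"
    unfolding AE_all_countable by (intro allI BC) simp
  then show ?thesis
  proof (rule AE_mp[OF _ AE_I2[OF impI]])
    fix \<omega> assume \<omega>: "\<forall>k::nat. eventually (\<lambda>N. \<omega> \<in> space M - A (inverse (real (Suc k))) N) sequentially"
    show "(\<lambda>N. (\<Sum>i\<in>{1..N}. g (Tw (xs N i, as N i) (muN N) (Zs i \<omega>))) / real N
            - (\<Sum>i\<in>{1..N}. G (muN N) g (xs N i, as N i)) / real N) \<longlonglongrightarrow> 0"
    proof (rule tendstoI)
      fix d :: real assume d: "d > 0"
      obtain k where k: "inverse (real (Suc k)) < d"
        using ex_inverse_of_nat_less[OF d] by (metis Suc_pred)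
      show "eventually (\<lambda>N. dist ((\<Sum>i\<in>{1..N}. g (Tw (xs N i, as N i) (muN N) (Zs i \<omega>))) / real N
            - (\<Sum>i\<in>{1..N}. G (muN N) g (xs N i, as N i)) / real N) 0 < d) sequentially"
        using \<omega>[rule_format, of k] eventually_ge_at_top[of 1]
      proof eventually_elim
        case (elim N)
        have N: "real N > 0" using elim(2) by simp
        have "F N \<omega> < inverse (real (Suc k)) * real N" using elim(1) by (auto simp: A_def not_le)
        then have "F N \<omega> / real N < inverse (real (Suc k))" using N by (simp add: divide_less_eq)
        moreover have "dist ((\<Sum>i\<in>{1..N}. g (Tw (xs N i, as N i) (muN N) (Zs i \<omega>))) / real N
            - (\<Sum>i\<in>{1..N}. G (muN N) g (xs N i, as N i)) / real N) 0 = F N \<omega> / real N"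
          using N by (simp add: F_def dist_real_def diff_divide_distrib[symmetric])
        ultimately show ?case using k by linarith
      qed
    qed
  qed
qed

end

datatype pexp = PC rat | PV nat | PAdd pexp pexp | PMul pexp pexp

instance pexp :: countable by countable_datatype

primrec peval :: "pexp \<Rightarrow> 'x::euclidean_space \<Rightarrow> real" where
  "peval (PC q) x = of_rat q"
| "peval (PV n) x = x \<bullet> from_nat_into (Basis::'x set) n"
| "peval (PAdd a b) x = peval a x + peval b x"
| "peval (PMul a b) x = peval a x * peval b x"

lemma peval_cont: "continuous_on UNIV (peval e)"
  by (induction e) (auto intro!: continuous_intros)

definition Apx :: "'x::euclidean_space set \<Rightarrow> ('x \<Rightarrow> real) \<Rightarrow> bool" where
  "Apx S h \<longleftrightarrow> (\<forall>\<epsilon>>0. \<exists>e. \<forall>x\<in>S. \<bar>h x - peval e x\<bar> < \<epsilon>)"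

lemma Apx_const: "Apx S (\<lambda>_. c)"
  unfolding Apx_def
proof (intro allI impI)
  fix \<epsilon> :: real assume "\<epsilon> > 0"
  then obtain r where r: "r \<in> \<rat>" "c - \<epsilon> < r" "r < c + \<epsilon>" using Rats_dense_in_real[of "c - \<epsilon>" "c + \<epsilon>"] by auto
  then obtain q where "r = of_rat q" by (auto elim: Rats_cases)
  with r show "\<exists>e. \<forall>x\<in>S. \<bar>c - peval e x\<bar> < \<epsilon>" by (intro exI[of _ "PC q"]) auto
qed

lemma Apx_coord: "b \<in> Basis \<Longrightarrow> Apx S (\<lambda>x. x \<bullet> b)"
proof -
  assume "b \<in> Basis"
  then obtain n where "from_nat_into (Basis :: 'a set) n = b"
    using from_nat_into_surj[of Basis b] countable_finite[OF finite_Basis] by auto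
  then show ?thesis unfolding Apx_def by (intro allI impI exI[of _ "PV n"]) auto
qed

lemma Apx_add: "Apx S h \<Longrightarrow> Apx S k \<Longrightarrow> Apx S (\<lambda>x. h x + k x)"
  unfolding Apx_def
proof (intro allI impI)
  fix \<epsilon> :: real assume h: "\<forall>\<epsilon>>0. \<exists>e. \<forall>x\<in>S. \<bar>h x - peval e x\<bar> < \<epsilon>"
    and k: "\<forall>\<epsilon>>0. \<exists>e. \<forall>x\<in>S. \<bar>k x - peval e x\<bar> < \<epsilon>" and e: "\<epsilon> > 0"
  obtain e1 where e1: "\<forall>x\<in>S. \<bar>h x - peval e1 x\<bar> < \<epsilon>/2" using h e by (meson half_gt_zero)
  obtain e2 where e2: "\<forall>x\<in>S. \<bar>k x - peval e2 x\<bar> < \<epsilon>/2" using k e by (meson half_gt_zero)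
  show "\<exists>e. \<forall>x\<in>S. \<bar>h x + k x - peval e x\<bar> < \<epsilon>"
  proof (intro exI[of _ "PAdd e1 e2"] ballI)
    fix x assume "x \<in> S"
    with e1 e2 have "\<bar>h x - peval e1 x\<bar> < \<epsilon>/2" "\<bar>k x - peval e2 x\<bar> < \<epsilon>/2" by auto
    moreover have "\<bar>h x + k x - peval (PAdd e1 e2) x\<bar> \<le> \<bar>h x - peval e1 x\<bar> + \<bar>k x - peval e2 x\<bar>"
      by (simp add: add_diff_add abs_triangle_ineq)
    ultimately show "\<bar>h x + k x - peval (PAdd e1 e2) x\<bar> < \<epsilon>" by linarith
  qed
qed

lemma Apx_mult:
  assumes S: "compact S" and hc: "continuous_on S h" and kc: "continuous_on S k"
    and h: "Apx S h" and k: "Apx S k"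
  shows "Apx S (\<lambda>x. h x * k x)"
  unfolding Apx_def
proof (intro allI impI)
  fix \<epsilon> :: real assume e: "\<epsilon> > 0"
  obtain Bh where Bh0: "Bh > 0" "\<forall>y\<in>h ` S. norm y \<le> Bh"
    using compact_imp_bounded[OF compact_continuous_image[OF hc S]] unfolding bounded_pos by blast
  have Bh: "Bh > 0" "\<forall>x\<in>S. norm (h x) \<le> Bh" using Bh0 by auto
  obtain Bk where Bk0: "Bk > 0" "\<forall>y\<in>k ` S. norm y \<le> Bk"
    using compact_imp_bounded[OF compact_continuous_image[OF kc S]] unfolding bounded_pos by blast
  have Bk: "Bk > 0" "\<forall>x\<in>S. norm (k x) \<le> Bk" using Bk0 by auto
  define \<delta> where "\<delta> = min 1 ((\<epsilon>/2) / (Bh + Bk + 1))"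
  have pos: "Bh + Bk + 1 > 0" using Bh Bk by simp
  have d1: "\<delta> > 0" using e pos by (simp add: \<delta>_def)
  have d2: "\<delta> \<le> 1" by (simp add: \<delta>_def)
  have "\<delta> * (Bh + Bk + 1) \<le> ((\<epsilon>/2) / (Bh + Bk + 1)) * (Bh + Bk + 1)"
    using pos by (intro mult_right_mono) (auto simp: \<delta>_def)
  also have "\<dots> = \<epsilon>/2" proof -
    have cancel: "\<And>c x::real. c > 0 \<Longrightarrow> x / c * c = x" by simp
    show ?thesis by (rule cancel[OF pos])
  qed
  finally have d: "\<delta> > 0" "\<delta> \<le> 1" "\<delta> * (Bh + Bk + 1) \<le> \<epsilon>/2" using d1 d2 by auto
  obtain e1 where e1: "\<forall>x\<in>S. \<bar>h x - peval e1 x\<bar> < \<delta>" using h d unfolding Apx_def by blast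
  obtain e2 where e2: "\<forall>x\<in>S. \<bar>k x - peval e2 x\<bar> < \<delta>" using k d unfolding Apx_def by blast
  show "\<exists>e. \<forall>x\<in>S. \<bar>h x * k x - peval e x\<bar> < \<epsilon>"
  proof (intro exI[of _ "PMul e1 e2"] ballI)
    fix x assume x: "x \<in> S"
    define a where "a = h x" define b where "b = k x"
    define a' where "a' = peval e1 x" define b' where "b' = peval e2 x"
    have 1: "\<bar>a - a'\<bar> < \<delta>" "\<bar>b - b'\<bar> < \<delta>" using e1 e2 x by (auto simp: a_def a'_def b_def b'_def)
    have 2: "\<bar>a\<bar> \<le> Bh" "\<bar>b\<bar> \<le> Bk" using Bh Bk x by (auto simp: a_def b_def)
    have "\<bar>b'\<bar> \<le> Bk + 1" using 1 2 d by linarith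
    have "\<bar>a * b - a' * b'\<bar> = \<bar>a * (b - b') + (a - a') * b'\<bar>" by (simp add: algebra_simps)
    also have "\<dots> \<le> \<bar>a\<bar> * \<bar>b - b'\<bar> + \<bar>a - a'\<bar> * \<bar>b'\<bar>" by (simp add: abs_mult[symmetric] abs_triangle_ineq)
    also have "\<dots> \<le> Bh * \<delta> + \<delta> * (Bk + 1)"
      using 1 2 \<open>\<bar>b'\<bar> \<le> Bk + 1\<close> by (intro add_mono mult_mono) auto
    also have "\<dots> = \<delta> * (Bh + Bk + 1)" by (simp add: algebra_simps)
    also have "\<dots> \<le> \<epsilon>/2" by (rule d(3))
    finally have "\<bar>a * b - a' * b'\<bar> < \<epsilon>" using e by linarith
    then show "\<bar>h x * k x - peval (PMul e1 e2) x\<bar> < \<epsilon>" by (simp add: a_def b_def a'_def b'_def)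
  qed
qed

lemma Apx_sum:
  assumes "finite I" "\<And>i. i \<in> I \<Longrightarrow> Apx S (f i)"
  shows "Apx S (\<lambda>x. \<Sum>i\<in>I. f i x)"
  using assms
proof (induction I rule: finite_induct)
  case empty
  then show ?case using Apx_const[of S 0] by simp
next
  case (insert i I)
  then show ?case by (simp add: Apx_add)
qed

lemma linear_repr:
  fixes f :: "'x::euclidean_space \<Rightarrow> real"
  assumes "bounded_linear f"
  shows "f x = (\<Sum>b\<in>Basis. (x \<bullet> b) * f b)"
proof -
  interpret bounded_linear f by fact
  have "f x = f (\<Sum>b\<in>Basis. (x \<bullet> b) *\<^sub>R b)" by (simp add: euclidean_representation)
  also have "\<dots> = (\<Sum>b\<in>Basis. (x \<bullet> b) *\<^sub>R f b)" by (simp add: sum scaleR)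
  finally show ?thesis by simp
qed

lemma Apx_poly:
  fixes p :: "'x::euclidean_space \<Rightarrow> real"
  assumes S: "compact S" and p: "real_polynomial_function p"
  shows "Apx S p"
  using p
proof (induction p rule: real_polynomial_function.induct)
  case (linear f)
  have "Apx S (\<lambda>x. \<Sum>b\<in>Basis. (x \<bullet> b) * f b)"
  proof (rule Apx_sum)
    fix b :: 'x assume b: "b \<in> Basis"
    show "Apx S (\<lambda>x. (x \<bullet> b) * f b)"
      by (rule Apx_mult[OF S continuous_on_inner[OF continuous_on_id continuous_on_const] continuous_on_const Apx_coord[OF b] Apx_const])
  qed (rule finite_Basis)
  moreover have "(\<lambda>x. \<Sum>b\<in>Basis. (x \<bullet> b) * f b) = f"
    by (rule ext) (rule linear_repr[OF linear, symmetric])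
  ultimately show ?case by (simp only:)
next
  case (const c)
  then show ?case by (rule Apx_const)
next
  case (add f g)
  then show ?case using Apx_add by blast
next
  case (mult f g)
  have "continuous_on S f" "continuous_on S g"
    using continuous_real_polymonial_function mult(1,2) continuous_at_imp_continuous_on by blast+
  then show ?case using Apx_mult[OF S] mult by blast
qed

lemma dense_peval:
  fixes f :: "'x::euclidean_space \<Rightarrow> real"
  assumes S: "compact S" and f: "continuous_on S f" and e: "\<epsilon> > 0"
  shows "\<exists>e. \<forall>x\<in>S. \<bar>f x - peval e x\<bar> < \<epsilon>"
proof -
  obtain p where p: "real_polynomial_function p" "\<And>x. x \<in> S \<Longrightarrow> \<bar>f x - p x\<bar> < \<epsilon>/2"
    using Stone_Weierstrass_real_polynomial_function[OF S f, of "\<epsilon>/2"] e by auto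
  obtain q where q: "\<forall>x\<in>S. \<bar>p x - peval q x\<bar> < \<epsilon>/2"
    using Apx_poly[OF S p(1)] e unfolding Apx_def by (meson half_gt_zero)
  show ?thesis
  proof (intro exI ballI)
    fix x assume x: "x \<in> S"
    have "\<bar>f x - peval q x\<bar> \<le> \<bar>f x - p x\<bar> + \<bar>p x - peval q x\<bar>" using abs_triangle_ineq[of "f x - p x" "p x - peval q x"] by simp
    moreover have "\<bar>f x - p x\<bar> < \<epsilon>/2" "\<bar>p x - peval q x\<bar> < \<epsilon>/2" using p(2)[OF x] q x by auto
    ultimately show "\<bar>f x - peval q x\<bar> < \<epsilon>" by linarith
  qed
qed


context setting begin

lemma fin_net: "e > 0 \<Longrightarrow> \<exists>K. finite K \<and> K \<subseteq> D \<and> D \<subseteq> (\<Union>x\<in>K. ball x e)"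
proof -
  assume e: "e > 0"
  have "D \<subseteq> (\<Union>x\<in>D. ball x e)" using e by auto
  then obtain K where "K \<subseteq> D" "finite K" "D \<subseteq> (\<Union>x\<in>K. ball x e)"
    using compactE_image[OF A0, of D "\<lambda>x. ball x e"] by auto
  then show ?thesis by blast
qed

definition "Kk k = (SOME K. finite K \<and> K \<subseteq> D \<and> D \<subseteq> (\<Union>x\<in>K. ball x (inverse (real (Suc k)))))"
definition "Cset = (\<Union>k. Kk k)"
definition "dd j = from_nat_into Cset j"

lemma Kk: "finite (Kk k)" "Kk k \<subseteq> D" "D \<subseteq> (\<Union>x\<in>Kk k. ball x (inverse (real (Suc k))))"
proof -
  have "\<exists>K. finite K \<and> K \<subseteq> D \<and> D \<subseteq> (\<Union>x\<in>K. ball x (inverse (real (Suc k))))"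
    by (rule fin_net) simp
  from someI_ex[OF this] show "finite (Kk k)" "Kk k \<subseteq> D" "D \<subseteq> (\<Union>x\<in>Kk k. ball x (inverse (real (Suc k))))"
    unfolding Kk_def by auto
qed

lemma Cset: "countable Cset" "Cset \<subseteq> D" "Cset \<noteq> {}"
proof -
  show "countable Cset" unfolding Cset_def using Kk(1) by (intro countable_UN) (auto intro: countable_finite)
  show "Cset \<subseteq> D" unfolding Cset_def using Kk(2) by auto
  obtain p where "p \<in> D" using D_ne by auto
  then have "Kk 0 \<noteq> {}" using Kk(3)[of 0] by auto
  then show "Cset \<noteq> {}" unfolding Cset_def by auto
qed

lemma dd_in: "dd j \<in> D" using from_nat_into[OF Cset(3)] Cset(2) unfolding dd_def by auto

lemma dd_dense: "p \<in> D \<Longrightarrow> \<exists>j. dist p (dd j) < inverse (real (Suc k))"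
proof -
  assume p: "p \<in> D"
  then obtain c where c: "c \<in> Kk k" "p \<in> ball c (inverse (real (Suc k)))" using Kk(3)[of k] by auto
  then have "c \<in> Cset" unfolding Cset_def by auto
  then obtain j where "dd j = c" unfolding dd_def using from_nat_into_surj[OF Cset(1)] by blast
  then show ?thesis using c by (auto simp: dist_commute)
qed

definition "idx k p = (LEAST j. dist p (dd j) < inverse (real (Suc k)))"

lemma idx: "p \<in> D \<Longrightarrow> dist p (dd (idx k p)) < inverse (real (Suc k))"
  unfolding idx_def using LeastI_ex[OF dd_dense] by blast

lemma idx_meas: "idx k \<in> measurable borel (count_space UNIV)"
  unfolding idx_def
proof (rule measurable_Least)
  fix i
  have "(\<lambda>p. dist p (dd i)) \<in> borel_measurable borel" by measurable
  then show "(\<lambda>p. dist p (dd i) < inverse (real (Suc k))) \<in> measurable borel (count_space UNIV)"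
    by measurable
qed

definition "s0 = fst (SOME p. p \<in> D)"
lemma s0: "s0 \<in> S"
proof -
  have "\<exists>p. p \<in> D" using D_ne by blast
  then have "(SOME p. p \<in> D) \<in> D" by (rule someI_ex)
  then show ?thesis using D_sub unfolding s0_def by auto
qed

definition "kfun z = (if fst z \<in> D then Tw (fst z) mu0 (Zs 1 (snd z)) else s0)"

lemma kfun_in: "kfun z \<in> S" using Tw_in mu0_Prob s0 by (auto simp: kfun_def)

lemma Tw_meas: "p \<in> D \<Longrightarrow> (\<lambda>z. Tw p mu0 (Zs 1 (snd z))) \<in> borel_measurable (Q \<Otimes>\<^sub>M M)"
  using measurable_compose[OF measurable_snd measurable_compose[OF Zs_rv borel_measurable_continuous_onI[OF Tw_cont[OF _ mu0_Prob]]]]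
  by simp

lemma Dset: "{z \<in> space (Q \<Otimes>\<^sub>M M). fst z \<in> D} \<in> sets (Q \<Otimes>\<^sub>M M)"
proof -
  have e: "{z \<in> space (Q \<Otimes>\<^sub>M M). fst z \<in> D} = fst -` D \<inter> space (Q \<Otimes>\<^sub>M M)" by auto
  have "D \<in> sets Q" using D_borel Q_facts(2) by simp
  then have "fst -` D \<inter> space (Q \<Otimes>\<^sub>M M) \<in> sets (Q \<Otimes>\<^sub>M M)"
    by (rule measurable_sets[OF measurable_fst])
  then show ?thesis by (simp only: e)
qed

lemma kfun_meas: "kfun \<in> borel_measurable (Q \<Otimes>\<^sub>M M)"
proof (rule borel_measurable_LIMSEQ_metric)
  define F where "F k z = (if fst z \<in> D then Tw (dd (idx k (fst z))) mu0 (Zs 1 (snd z)) else s0)" for k z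
  show "F k \<in> borel_measurable (Q \<Otimes>\<^sub>M M)" for k
    unfolding F_def
  proof (rule measurable_If[OF _ _ Dset])
    show "(\<lambda>z. s0) \<in> borel_measurable (Q \<Otimes>\<^sub>M M)" by simp
    have g: "(\<lambda>z. idx k (fst z)) \<in> measurable (Q \<Otimes>\<^sub>M M) (count_space UNIV)"
    proof -
      have "idx k \<in> measurable Q (count_space UNIV)" using idx_meas by (simp add: Q_meas)
      from measurable_compose[OF measurable_fst this] show ?thesis by assumption
    qed
    show "(\<lambda>z. Tw (dd (idx k (fst z))) mu0 (Zs 1 (snd z))) \<in> borel_measurable (Q \<Otimes>\<^sub>M M)"
      using measurable_compose_countable[OF Tw_meas[OF dd_in] g] by simp
  qed
  fix z assume "z \<in> space (Q \<Otimes>\<^sub>M M)"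
  show "(\<lambda>k. F k z) \<longlonglongrightarrow> kfun z"
  proof (cases "fst z \<in> D")
    case False then show ?thesis by (simp add: F_def kfun_def)
  next
    case True
    have "(\<lambda>k. dd (idx k (fst z))) \<longlonglongrightarrow> fst z"
    proof (rule tendstoI)
      fix e :: real assume e: "e > 0"
      obtain n where n: "n > 0" "inverse (real n) < e" using ex_inverse_of_nat_less[OF e] by blast
      show "eventually (\<lambda>k. dist (dd (idx k (fst z))) (fst z) < e) sequentially"
        using eventually_ge_at_top[of n]
      proof eventually_elim
        case (elim k)
        have i1: "inverse (real (Suc k)) \<le> inverse (real n)" using n elim by (intro le_imp_inverse_le) auto
        have i2: "dist (dd (idx k (fst z))) (fst z) < inverse (real (Suc k))"
          using idx[OF True, of k] by (simp only: dist_commute)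
        show ?case using i1 i2 n(2) by linarith
      qed
    qed
    then have "(\<lambda>k. Tw (dd (idx k (fst z))) mu0 (Zs 1 (snd z))) \<longlonglongrightarrow> Tw (fst z) mu0 (Zs 1 (snd z))"
      using True dd_in mu0_Prob by (intro Tw_lim) (auto simp: topspace_W)
    then show ?thesis using True by (simp add: F_def kfun_def)
  qed
qed

end

context setting begin

lemma Ttilde_eq: "Ttilde T M (Zs 1) D mu0 Q z0 = distr (Q \<Otimes>\<^sub>M M) borel kfun"
proof -
  interpret M: prob_space M by (rule M_prob)
  let ?R = "distr (Q \<Otimes>\<^sub>M M) borel kfun"
  have R: "?R = measure_of UNIV (sets borel) (emeasure ?R)"
    using measure_of_of_measure[of ?R] by simp
  have "Ttilde T M (Zs 1) D mu0 Q z0 = measure_of UNIV (sets borel) (emeasure ?R)"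
    unfolding Ttilde_def
  proof (rule measure_of_eq)
    fix B :: "'x set" assume "B \<in> sigma_sets UNIV (sets borel)"
    then have B: "B \<in> sets borel" by (simp add: sets.sigma_sets_eq[of borel, simplified])
    define X where "X = kfun -` B \<inter> space (Q \<Otimes>\<^sub>M M)"
    have X: "X \<in> sets (Q \<Otimes>\<^sub>M M)" unfolding X_def by (rule measurable_sets[OF kfun_meas B])
    have "emeasure ?R B = emeasure (Q \<Otimes>\<^sub>M M) X"
      unfolding X_def by (rule emeasure_distr[OF kfun_meas B])
    also have "\<dots> = (\<integral>\<^sup>+p. emeasure M (Pair p -` X) \<partial>Q)"
      by (rule M.emeasure_pair_measure_alt[OF X])
    also have "\<dots> = (\<integral>\<^sup>+p\<in>D. emeasure M {\<omega>\<in>space M. T (fst p) (snd p) mu0 (Zs 1 \<omega>) z0 \<in> B} \<partial>Q)"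
    proof (rule nn_integral_cong_AE)
      show "AE p in Q. emeasure M (Pair p -` X) =
          emeasure M {\<omega>\<in>space M. T (fst p) (snd p) mu0 (Zs 1 \<omega>) z0 \<in> B} * indicator D p"
        using AE_Q_D
      proof (rule AE_mp[OF _ AE_I2[OF impI]])
        fix p assume p: "p \<in> D"
        have "Pair p -` X = {\<omega>\<in>space M. T (fst p) (snd p) mu0 (Zs 1 \<omega>) z0 \<in> B}"
          using p Q_facts(4) by (auto simp: X_def kfun_def Tw_def space_pair_measure)
        then show "emeasure M (Pair p -` X) =
          emeasure M {\<omega>\<in>space M. T (fst p) (snd p) mu0 (Zs 1 \<omega>) z0 \<in> B} * indicator D p"
          using p by simp
      qed
    qed
    finally show "(\<integral>\<^sup>+p\<in>D. emeasure M {\<omega>\<in>space M. T (fst p) (snd p) mu0 (Zs 1 \<omega>) z0 \<in> B} \<partial>Q)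
        = emeasure ?R B" by simp
  qed auto
  then show ?thesis using R by simp
qed

lemma Ttilde_sets: "sets (Ttilde T M (Zs 1) D mu0 Q z0) = sets borel"
  unfolding Ttilde_eq by simp

lemma Ttilde_integral:
  fixes f :: "'x \<Rightarrow> real"
  assumes fm: "f \<in> borel_measurable borel" and fc: "continuous_on S f"
  shows "integral\<^sup>L (Ttilde T M (Zs 1) D mu0 Q z0) f = Lg f"
proof -
  interpret M: prob_space M by (rule M_prob)
  interpret Qp: prob_space Q by (rule Q_facts)
  interpret P: pair_sigma_finite Q M by unfold_locales
  interpret QM: prob_space "Q \<Otimes>\<^sub>M M" by (rule prob_space_pair) unfold_locales
  obtain B where B: "B > 0" "\<And>x. x \<in> S \<Longrightarrow> \<bar>f x\<bar> \<le> B" using bounded_on_S[OF fc] by blast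
  have m: "(\<lambda>z. f (kfun z)) \<in> borel_measurable (Q \<Otimes>\<^sub>M M)"
    by (rule measurable_compose[OF kfun_meas fm])
  have int: "integrable (Q \<Otimes>\<^sub>M M) (\<lambda>z. f (kfun z))"
    using m B kfun_in by (intro QM.integrable_const_bound[where B=B]) auto
  have "integral\<^sup>L (Ttilde T M (Zs 1) D mu0 Q z0) f = (\<integral>z. f (kfun z) \<partial>(Q \<Otimes>\<^sub>M M))"
    unfolding Ttilde_eq by (rule integral_distr[OF kfun_meas fm])
  also have "\<dots> = (\<integral>p. \<integral>\<omega>. f (kfun (p, \<omega>)) \<partial>M \<partial>Q)"
    using P.integral_fst'[OF int] by simp
  also have "\<dots> = (\<integral>p. indicator D p * G mu0 f p \<partial>Q)"
  proof (rule integral_cong_AE)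
    show "(\<lambda>p. \<integral>\<omega>. f (kfun (p, \<omega>)) \<partial>M) \<in> borel_measurable Q"
      using M.borel_measurable_lebesgue_integral[of "\<lambda>p \<omega>. f (kfun (p, \<omega>))" Q] m by simp
    have "(\<lambda>p. indicator D p *\<^sub>R G mu0 f p) \<in> borel_measurable borel"
      by (rule borel_measurable_continuous_on_indicator[OF D_borel G_cont[OF fc]])
    then show "(\<lambda>p. indicator D p * G mu0 f p) \<in> borel_measurable Q" by (simp add: Q_meas)
    show "AE p in Q. (\<integral>\<omega>. f (kfun (p, \<omega>)) \<partial>M) = indicator D p * G mu0 f p"
      using AE_Q_D
    proof (rule AE_mp[OF _ AE_I2[OF impI]])
      fix p assume p: "p \<in> D"
      then show "(\<integral>\<omega>. f (kfun (p, \<omega>)) \<partial>M) = indicator D p * G mu0 f p"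
        by (simp add: kfun_def G_def)
    qed
  qed
  finally show ?thesis by (simp add: Lg_def)
qed

end

context setting begin

lemma integrable_gTw:
  fixes g :: "'x \<Rightarrow> real"
  assumes "p \<in> D" "\<nu> \<in> Prob_on S" "continuous_on S g"
  shows "integrable M (\<lambda>\<omega>. g (Tw p \<nu> (Zs 1 \<omega>)))"
proof -
  interpret M: prob_space M by (rule M_prob)
  obtain B where B: "B > 0" "\<And>x. x \<in> S \<Longrightarrow> \<bar>g x\<bar> \<le> B" using bounded_on_S[OF assms(3)] by blast
  show ?thesis using B Tw_in assms by (intro M.integrable_const_bound[where B=B] gTw_meas) auto
qed

lemma G_diff:
  fixes f g :: "'x \<Rightarrow> real"
  assumes "p \<in> D" "\<nu> \<in> Prob_on S" "continuous_on S f" "continuous_on S g"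
  shows "G \<nu> f p - G \<nu> g p = G \<nu> (\<lambda>x. f x - g x) p"
  unfolding G_def using integrable_gTw[OF assms(1,2,3)] integrable_gTw[OF assms(1,2,4)]
  by (simp add: integral_diff)

lemma Lg_integrable:
  fixes f :: "'x \<Rightarrow> real"
  assumes "continuous_on S f"
  shows "integrable Q (\<lambda>p. indicator D p * G mu0 f p)"
proof -
  interpret Qp: prob_space Q by (rule Q_facts)
  obtain B where B: "B > 0" "\<And>x. x \<in> S \<Longrightarrow> \<bar>f x\<bar> \<le> B" using bounded_on_S[OF assms] by blast
  have "(\<lambda>p. indicator D p *\<^sub>R G mu0 f p) \<in> borel_measurable borel"
    by (rule borel_measurable_continuous_on_indicator[OF D_borel G_cont[OF assms]])
  then have m: "(\<lambda>p. indicator D p * G mu0 f p) \<in> borel_measurable Q" by (simp add: Q_meas)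
  have "\<bar>indicator D p * G mu0 f p\<bar> \<le> B" for p
    using G_bound[OF assms _ mu0_Prob B(2), of p] B by (cases "p \<in> D") auto
  then show ?thesis using m by (intro Qp.integrable_const_bound[where B=B]) auto
qed

lemma Lg_diff:
  fixes f g :: "'x \<Rightarrow> real"
  assumes f: "continuous_on S f" and g: "continuous_on S g"
  shows "Lg f - Lg g = Lg (\<lambda>x. f x - g x)"
proof -
  have "Lg f - Lg g = (\<integral>p. indicator D p * G mu0 f p - indicator D p * G mu0 g p \<partial>Q)"
    unfolding Lg_def using Lg_integrable[OF f] Lg_integrable[OF g] by (simp add: integral_diff)
  also have "\<dots> = Lg (\<lambda>x. f x - g x)"
  proof -
    have "\<And>p. indicator D p * G mu0 f p - indicator D p * G mu0 g p = indicator D p * G mu0 (\<lambda>x. f x - g x) p"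
    proof -
      fix p show "indicator D p * G mu0 f p - indicator D p * G mu0 g p = indicator D p * G mu0 (\<lambda>x. f x - g x) p"
        using G_diff[OF _ mu0_Prob f g, of p] by (cases "p \<in> D") (auto simp: algebra_simps)
    qed
    then show ?thesis unfolding Lg_def by simp
  qed
  finally show ?thesis .
qed

lemma Lg_bound:
  fixes h :: "'x \<Rightarrow> real"
  assumes h: "continuous_on S h" and c: "\<And>x. x \<in> S \<Longrightarrow> \<bar>h x\<bar> \<le> c"
  shows "\<bar>Lg h\<bar> \<le> c"
proof -
  interpret Qp: prob_space Q by (rule Q_facts)
  have b: "\<bar>indicator D p * G mu0 h p\<bar> \<le> c" for p
  proof (cases "p \<in> D")
    case True then show ?thesis using G_bound[OF h True mu0_Prob c] by simp
  next
    case False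
    obtain x where "x \<in> S" using D_ne D_sub by auto
    then have "0 \<le> c" using c[of x] by linarith
    then show ?thesis using False by simp
  qed
  have "\<bar>Lg h\<bar> \<le> (\<integral>p. \<bar>indicator D p * G mu0 h p\<bar> \<partial>Q)" unfolding Lg_def by (rule integral_abs_bound)
  also have "\<dots> \<le> (\<integral>p. c \<partial>Q)"
    using b Lg_integrable[OF h] by (intro integral_mono) auto
  finally show ?thesis by (simp add: Qp.prob_space)
qed

definition "Yg g \<omega> = (\<lambda>N. (\<Sum>i\<in>{1..N}. g (Tw (xs N i, as N i) (muN N) (Zs i \<omega>))) / real N)"

lemma Y_conv:
  fixes g :: "'x \<Rightarrow> real"
  assumes g: "continuous_on S g"
  shows "AE \<omega> in M. Yg g \<omega> \<longlonglongrightarrow> Lg g"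
  using hoeff_AE[OF g]
proof (rule AE_mp[OF _ AE_I2[OF impI]])
  fix \<omega> assume "(\<lambda>N. (\<Sum>i\<in>{1..N}. g (Tw (xs N i, as N i) (muN N) (Zs i \<omega>))) / real N
            - (\<Sum>i\<in>{1..N}. G (muN N) g (xs N i, as N i)) / real N) \<longlonglongrightarrow> 0"
  from tendsto_add[OF this E_conv[OF g]] show "Yg g \<omega> \<longlonglongrightarrow> Lg g" by (simp add: Yg_def)
qed

lemma Y_conv_all: "AE \<omega> in M. \<forall>e::pexp. Yg (peval e) \<omega> \<longlonglongrightarrow> Lg (peval e)"
  unfolding AE_all_countable
  using Y_conv continuous_on_subset[OF peval_cont subset_UNIV] by blast

lemma Yg_diff_bound:
  fixes f g :: "'x \<Rightarrow> real"
  assumes "\<And>x. x \<in> S \<Longrightarrow> \<bar>f x - g x\<bar> \<le> c" "N \<ge> 1"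
  shows "\<bar>Yg f \<omega> N - Yg g \<omega> N\<bar> \<le> c"
proof -
  have N: "real N > 0" using assms(2) by simp
  have "\<bar>(\<Sum>i\<in>{1..N}. f (Tw (xs N i, as N i) (muN N) (Zs i \<omega>))) - (\<Sum>i\<in>{1..N}. g (Tw (xs N i, as N i) (muN N) (Zs i \<omega>)))\<bar>
      = \<bar>\<Sum>i\<in>{1..N}. f (Tw (xs N i, as N i) (muN N) (Zs i \<omega>)) - g (Tw (xs N i, as N i) (muN N) (Zs i \<omega>))\<bar>"
    by (simp add: sum_subtractf)
  also have "\<dots> \<le> (\<Sum>i\<in>{1..N}. \<bar>f (Tw (xs N i, as N i) (muN N) (Zs i \<omega>)) - g (Tw (xs N i, as N i) (muN N) (Zs i \<omega>))\<bar>)"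
    by (rule sum_abs)
  also have "\<dots> \<le> (\<Sum>i\<in>{1..N}. c)"
    using assms(1) Tw_in pN_in muN_Prob[OF assms(2)] by (intro sum_mono) auto
  also have "\<dots> = real N * c" by simp
  finally have *: "\<bar>(\<Sum>i\<in>{1..N}. f (Tw (xs N i, as N i) (muN N) (Zs i \<omega>))) - (\<Sum>i\<in>{1..N}. g (Tw (xs N i, as N i) (muN N) (Zs i \<omega>)))\<bar> \<le> real N * c" .
  have "\<bar>Yg f \<omega> N - Yg g \<omega> N\<bar> = \<bar>(\<Sum>i\<in>{1..N}. f (Tw (xs N i, as N i) (muN N) (Zs i \<omega>))) - (\<Sum>i\<in>{1..N}. g (Tw (xs N i, as N i) (muN N) (Zs i \<omega>)))\<bar> / real N"
    unfolding Yg_def using N by (simp add: diff_divide_distrib[symmetric])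
  also have "\<dots> \<le> c" using * N by (simp add: divide_le_eq mult.commute)
  finally show ?thesis .
qed

lemma Y_conv_cont:
  fixes f :: "'x \<Rightarrow> real"
  assumes f: "continuous_on S f" and \<omega>: "\<forall>e::pexp. Yg (peval e) \<omega> \<longlonglongrightarrow> Lg (peval e)"
  shows "Yg f \<omega> \<longlonglongrightarrow> Lg f"
proof (rule tendstoI)
  fix \<epsilon> :: real assume \<epsilon>: "\<epsilon> > 0"
  obtain e where e: "\<forall>x\<in>S. \<bar>f x - peval e x\<bar> < \<epsilon>/3"
    using dense_peval[OF S_compact f, of "\<epsilon>/3"] \<epsilon> by auto
  have pc: "continuous_on S (peval e)" using continuous_on_subset[OF peval_cont subset_UNIV] .
  have hc: "continuous_on S (\<lambda>x. f x - peval e x)" using f pc by (intro continuous_on_diff)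
  have L: "\<bar>Lg f - Lg (peval e)\<bar> \<le> \<epsilon>/3"
    using Lg_bound[OF hc, of "\<epsilon>/3"] e Lg_diff[OF f pc] by (auto intro: less_imp_le)
  have ev3: "eventually (\<lambda>N. dist (Yg (peval e) \<omega> N) (Lg (peval e)) < \<epsilon>/3) sequentially"
    using \<epsilon> by (intro tendstoD[OF \<omega>[rule_format, of e]]) simp
  show "eventually (\<lambda>N. dist (Yg f \<omega> N) (Lg f) < \<epsilon>) sequentially"
    using ev3 eventually_ge_at_top[of 1]
  proof eventually_elim
    case (elim N)
    have Y: "\<bar>Yg f \<omega> N - Yg (peval e) \<omega> N\<bar> \<le> \<epsilon>/3"
      using e elim(2) by (intro Yg_diff_bound) (auto intro: less_imp_le)
    have "\<bar>Yg (peval e) \<omega> N - Lg (peval e)\<bar> < \<epsilon>/3" using elim(1) by (simp add: dist_real_def)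
    then have a: "Yg (peval e) \<omega> N - Lg (peval e) < \<epsilon>/3" "-(Yg (peval e) \<omega> N - Lg (peval e)) < \<epsilon>/3"
      by (simp_all only: abs_less_iff)
    have b: "Yg f \<omega> N - Yg (peval e) \<omega> N \<le> \<epsilon>/3" "-(Yg f \<omega> N - Yg (peval e) \<omega> N) \<le> \<epsilon>/3"
      using Y by (simp_all only: abs_le_iff)
    have c: "Lg f - Lg (peval e) \<le> \<epsilon>/3" "-(Lg f - Lg (peval e)) \<le> \<epsilon>/3"
      using L by (simp_all only: abs_le_iff)
    have "Yg f \<omega> N - Lg f < \<epsilon>" "-(Yg f \<omega> N - Lg f) < \<epsilon>" using a b c by linarith+
    then show ?case by (simp only: dist_real_def abs_less_iff)
  qed
qed

lemma emp_sets:
  fixes ys :: "nat \<Rightarrow> 'b::topological_space"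
  shows "sets (emp_measure N ys) = sets (borel :: 'b measure)"
proof -
  have "sets (emp_measure N ys) = sigma_sets UNIV (sets borel)"
    unfolding emp_measure_def by (rule sets_measure_of) simp
  then show ?thesis using sets.sigma_sets_eq[of "borel :: 'b measure"] by simp
qed

lemma main:
  "AE \<omega> in M. weak_conv_on S
           (\<lambda>N. emp_measure N (\<lambda>i. T (xs N i) (as N i) (emp_measure N (xs N)) (Zs i \<omega>) z0))
           (Ttilde T M (Zs 1) D (distr Q borel fst) Q z0)"
  using Y_conv_all
proof (rule AE_mp[OF _ AE_I2[OF impI]])
  fix \<omega> assume \<omega>: "\<forall>e::pexp. Yg (peval e) \<omega> \<longlonglongrightarrow> Lg (peval e)"
  show "weak_conv_on S (\<lambda>N. emp_measure N (\<lambda>i. T (xs N i) (as N i) (emp_measure N (xs N)) (Zs i \<omega>) z0))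
           (Ttilde T M (Zs 1) D (distr Q borel fst) Q z0)"
    unfolding weak_conv_on_def mu0_def[symmetric]
  proof
    fix f assume f: "f \<in> Cb S"
    then have fc: "continuous_on S f" by (simp add: Cb_def)
    show "(\<lambda>N. integral\<^sup>L (emp_measure N (\<lambda>i. T (xs N i) (as N i) (emp_measure N (xs N)) (Zs i \<omega>) z0)) f)
          \<longlonglongrightarrow> integral\<^sup>L (Ttilde T M (Zs 1) D mu0 Q z0) f"
    proof (cases "f \<in> borel_measurable borel")
      case False
      have "integral\<^sup>L (Ttilde T M (Zs 1) D mu0 Q z0) f = 0"
        by (rule integral_nonmeas_zero[OF Ttilde_sets False])
      moreover have "integral\<^sup>L (emp_measure N (\<lambda>i. T (xs N i) (as N i) (emp_measure N (xs N)) (Zs i \<omega>) z0)) f = 0" for N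
        by (rule integral_nonmeas_zero[OF emp_sets False])
      ultimately show ?thesis by simp
    next
      case True
      have ev: "eventually (\<lambda>N. Yg f \<omega> N = integral\<^sup>L (emp_measure N (\<lambda>i. T (xs N i) (as N i) (emp_measure N (xs N)) (Zs i \<omega>) z0)) f) sequentially"
        using eventually_ge_at_top[of 1]
      proof eventually_elim
        case (elim N)
        show ?case using emp_measure_integral[OF elim True]
          by (simp add: Yg_def Tw_def muN_def)
      qed
      have "Yg f \<omega> \<longlonglongrightarrow> Lg f" by (rule Y_conv_cont[OF fc \<omega>])
      then show ?thesis using tendsto_cong[OF ev] Ttilde_integral[OF True fc] by simp
    qed
  qed
qed

end

theorem mainTheorem7:
  fixes S :: "'x::euclidean_space set" and A :: "'a::euclidean_space set"
    and Dx :: "'x \<Rightarrow> 'a set" and D :: "('x \<times> 'a) set"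
    and T :: "'x \<Rightarrow> 'a \<Rightarrow> 'x measure \<Rightarrow> 'z::metric_space \<Rightarrow> 'z \<Rightarrow> 'x"
    and xs :: "nat \<Rightarrow> nat \<Rightarrow> 'x" and as :: "nat \<Rightarrow> nat \<Rightarrow> 'a"
    and Q :: "('x \<times> 'a) measure"
    and M :: "'w measure" and Zs :: "nat \<Rightarrow> 'w \<Rightarrow> 'z" and PZ :: "'z measure" and z0 :: 'z
  assumes S_compact: "compact S" and S_borel: "S \<in> sets borel"
    and A_borel: "A \<in> sets borel"
    and Dx_sub: "\<And>x. x \<in> S \<Longrightarrow> Dx x \<subseteq> A"
    and D_def: "D = {(x, a). x \<in> S \<and> a \<in> Dx x}"
    and A0: "compact D"
    and Z_compact: "compact (UNIV :: 'z set)"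
    and A3': "continuous_map
       (prod_topology (top_of_set S) (prod_topology (top_of_set A)
         (prod_topology (weak_topology S) (prod_topology euclidean euclidean))))
       (top_of_set S) (\<lambda>(x, a, \<mu>, z, z'). T x a \<mu> z z')"
    and xs_in: "\<And>N i. i \<in> {1..N} \<Longrightarrow> xs N i \<in> S"
    and as_in: "\<And>N i. i \<in> {1..N} \<Longrightarrow> as N i \<in> Dx (xs N i)"
    and Q_in: "Q \<in> Prob_on D"
    and Q_conv: "weak_conv_on D (\<lambda>N. emp_measure N (\<lambda>i. (xs N i, as N i))) Q"
    and M_prob: "prob_space M"
    and Zs_rv: "\<And>i. Zs i \<in> measurable M borel"
    and Zs_indep: "prob_space.indep_vars M (\<lambda>_. borel) Zs UNIV"
    and Zs_law: "\<And>i. distr M borel (Zs i) = PZ"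
  shows "AE \<omega> in M. weak_conv_on S
           (\<lambda>N. emp_measure N (\<lambda>i. T (xs N i) (as N i) (emp_measure N (xs N)) (Zs i \<omega>) z0))
           (Ttilde T M (Zs 1) D (distr Q borel fst) Q z0)"
proof -
  interpret setting S A Dx D T xs as Q M Zs PZ z0
    by (rule setting.intro[OF assms])
  show ?thesis by (rule main)
qed


end
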